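(* For any $f\in\mathcal{C}(I)$ and integers $l,m\ge0$, $\operatorname{dist}\big(f,\mathcal{R}^\alpha_{l,m}(I)\big)\le\operatorname{dist}\big(f,\mathcal{R}_{l,m}(I)\big)$.
   Context: $I=[x_0,x_N]$ is a compact interval, $\mathcal{C}(I)$ the real continuous functions with sup norm, $\Delta=\{x_0<x_1<\dots<x_N\}$, $N\ge2$, a fixed partition, $I_i=[x_{i-1},x_i]$, $L_i(x)=a_ix+b_i$ the affine map of $I$ onto $I_i$ with $L_i(x_0)=x_{i-1}$, $L_i(x_N)=x_i$; $\alpha\in(-1,1)^N$ fixed. For $f,b\in\mathcal{C}(I)$ with $b(x_0)=f(x_0)$, $b(x_N)=f(x_N)$, $f^\alpha_{\Delta,b}$ is the unique $g\in\mathcal{C}(I)$ with $g(x)=f(x)+\alpha_i(g-b)(L_i^{-1}(x))$ for $x\in I_i$. $B_n$ is the Bernstein operator $B_nf(x)=\sum_{k=0}^n f\big(x_0+\tfrac kn(x_N-x_0)\big)\binom nk\frac{(x-x_0)^k(x_N-x)^{n-k}}{(x_N-x_0)^n}$, and $\mathcal{F}^\alpha_{\Delta,B_n}(f)=f^\alpha_{\Delta,B_nf}$. $\mathcal{P}_k(I)$ = real algebraic polynomials of degree $\le k$; $\mathcal{R}_{l,m}(I)=\{p/q:p\in\mathcal{P}_l(I),q\in\mathcal{P}_m(I),q>0\text{ on }I\}$; $\mathcal{R}^\alpha_{l,m}(I)=\{\mathcal{F}^\alpha_{\Delta,B_n}(r):r\in\mathcal{R}_{l,m}(I),n\in\mathbb{N}\}$;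 $\operatorname{dist}(f,S)=\inf\{\|f-s\|_\infty:s\in S\}$. *)

theory Defs
  imports "HOL-Analysis.Analysis" "HOL-Computational_Algebra.Polynomial"
begin

text \<open>Continuous functions on I = [xs 0, xs N] are represented as real => real functions
  continuous on I; only their values on I matter.\<close>

definition Ivl :: "(nat \<Rightarrow> real) \<Rightarrow> nat \<Rightarrow> real set" where
  "Ivl xs N = {xs 0 .. xs N}"

definition Lmap :: "(nat \<Rightarrow> real) \<Rightarrow> nat \<Rightarrow> nat \<Rightarrow> real \<Rightarrow> real" where
  "Lmap xs N i t = xs (i - 1) + (xs i - xs (i - 1)) / (xs N - xs 0) * (t - xs 0)"

definition Linv :: "(nat \<Rightarrow> real) \<Rightarrow> nat \<Rightarrow> nat \<Rightarrow> real \<Rightarrow> real" where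
  "Linv xs N i y = xs 0 + (xs N - xs 0) / (xs i - xs (i - 1)) * (y - xs (i - 1))"

text \<open>To make it unique as a HOL function we set it to 0 outside I.\<close>
definition fractal :: "(nat \<Rightarrow> real) \<Rightarrow> nat \<Rightarrow> (nat \<Rightarrow> real) \<Rightarrow> (real \<Rightarrow> real)
    \<Rightarrow> (real \<Rightarrow> real) \<Rightarrow> (real \<Rightarrow> real)" where
  "fractal xs N \<alpha> b f = (THE g. continuous_on (Ivl xs N) g
      \<and> (\<forall>i\<in>{1..N}. \<forall>x\<in>{xs (i - 1) .. xs i}.
           g x = f x + \<alpha> i * (g (Linv xs N i x) - b (Linv xs N i x)))
      \<and> (\<forall>x. x \<notin> Ivl xs N \<longrightarrow> g x = 0))"

definition bernstein :: "(nat \<Rightarrow> real) \<Rightarrow> nat \<Rightarrow> nat \<Rightarrow> (real \<Rightarrow> real) \<Rightarrow> real \<Rightarrow> real" where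
  "bernstein xs N n f x = (\<Sum>k=0..n. f (xs 0 + real k / real n * (xs N - xs 0))
      * real (n choose k) * (x - xs 0) ^ k * (xs N - x) ^ (n - k) / (xs N - xs 0) ^ n)"

definition fractal_op :: "(nat \<Rightarrow> real) \<Rightarrow> nat \<Rightarrow> (nat \<Rightarrow> real) \<Rightarrow> nat
    \<Rightarrow> (real \<Rightarrow> real) \<Rightarrow> (real \<Rightarrow> real)" where
  "fractal_op xs N \<alpha> n f = fractal xs N \<alpha> (bernstein xs N n f) f"

definition rat_fun :: "(nat \<Rightarrow> real) \<Rightarrow> nat \<Rightarrow> nat \<Rightarrow> nat \<Rightarrow> (real \<Rightarrow> real) set" where
  "rat_fun xs N l m = {(\<lambda>x. poly p x / poly q x) | p q.
      degree p \<le> l \<and> degree q \<le> m \<and> (\<forall>x\<in>Ivl xs N. poly q x > 0)}"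

definition frac_rat_fun :: "(nat \<Rightarrow> real) \<Rightarrow> nat \<Rightarrow> (nat \<Rightarrow> real) \<Rightarrow> nat \<Rightarrow> nat
    \<Rightarrow> (real \<Rightarrow> real) set" where
  "frac_rat_fun xs N \<alpha> l m = {fractal_op xs N \<alpha> n r | r n. r \<in> rat_fun xs N l m \<and> n \<ge> 1}"

definition supnorm_on :: "real set \<Rightarrow> (real \<Rightarrow> real) \<Rightarrow> real" where
  "supnorm_on S h = Sup ((\<lambda>x. \<bar>h x\<bar>) ` S)"

definition dist_on :: "real set \<Rightarrow> (real \<Rightarrow> real) \<Rightarrow> (real \<Rightarrow> real) set \<Rightarrow> real" where
  "dist_on S f A = Inf ((\<lambda>s. supnorm_on S (\<lambda>x. f x - s x)) ` A)"

end

theory Submission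
  imports Defs
begin

lemma xs_less:
  assumes "\<forall>i<N. xs i < xs (Suc i)" "i < j" "j \<le> N"
  shows "(xs i :: real) < xs j"
  using assms(2,3)
proof (induction j)
  case 0 then show ?case by simp
next
  case (Suc j)
  then show ?case using assms(1)
    by (metis Suc_le_lessD less_Suc_eq less_trans order_less_imp_le)
qed

lemma xs_le:
  assumes "\<forall>i<N. xs i < xs (Suc i)" "i \<le> j" "j \<le> N"
  shows "(xs i :: real) \<le> xs j"
  using xs_less[OF assms(1)] assms(2,3) by (cases "i = j") (auto intro: less_imp_le)


lemma bern_repr:
  fixes xs :: "nat \<Rightarrow> real"
  assumes D: "xs 0 < xs N"
  shows "bernstein xs N n r x = (\<Sum>k\<le>n. r (xs 0 + (real k / real n) * (xs N - xs 0))
            * Bernstein n k ((x - xs 0) / (xs N - xs 0)))"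
  unfolding bernstein_def atMost_atLeast0
proof (rule sum.cong[OF refl])
  fix k assume k: "k \<in> {0..n}"
  define D where "D = xs N - xs 0"
  have Dp: "D > 0" using D D_def by simp
  have 1: "1 - (x - xs 0) / D = (xs N - x) / D" using Dp by (simp add: field_simps D_def)
  have pw: "D ^ n = D ^ k * D ^ (n - k)" using k by (simp flip: power_add)
  show "r (xs 0 + real k / real n * (xs N - xs 0)) * real (n choose k) * (x - xs 0) ^ k *
         (xs N - x) ^ (n - k) / (xs N - xs 0) ^ n =
        r (xs 0 + real k / real n * (xs N - xs 0)) * Bernstein n k ((x - xs 0) / (xs N - xs 0))"
    unfolding D_def[symmetric] Bernstein_def 1 pw power_divide by simp
qed

lemma bern_cont:
  fixes xs :: "nat \<Rightarrow> real"
  assumes D: "xs 0 < xs N"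
  shows "continuous_on S (bernstein xs N n r)"
  unfolding bernstein_def using D by (intro continuous_intros) auto

lemma bern_ends:
  fixes xs :: "nat \<Rightarrow> real"
  assumes D: "xs 0 < xs N" and n: "n \<ge> 1"
  shows "bernstein xs N n r (xs 0) = r (xs 0)" "bernstein xs N n r (xs N) = r (xs N)"
proof -
  have "Bernstein n k 0 = (if k = 0 then 1 else 0)" for k by (simp add: Bernstein_def)
  then have "(\<Sum>k\<le>n. r (xs 0 + (real k / real n) * (xs N - xs 0)) * Bernstein n k 0)
      = (\<Sum>k\<le>n. if k = 0 then r (xs 0 + (real k / real n) * (xs N - xs 0)) else 0)"
    by (intro sum.cong) auto
  also have "\<dots> = r (xs 0)" by simp
  finally show "bernstein xs N n r (xs 0) = r (xs 0)"
    unfolding bern_repr[OF D] by simp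
  have "Bernstein n k 1 = (if k = n then 1 else 0)" if "k \<le> n" for k
    using that by (simp add: Bernstein_def)
  then have "(\<Sum>k\<le>n. r (xs 0 + (real k / real n) * (xs N - xs 0)) * Bernstein n k 1)
      = (\<Sum>k\<le>n. if k = n then r (xs 0 + (real k / real n) * (xs N - xs 0)) else 0)"
    by (intro sum.cong) auto
  also have "\<dots> = r (xs N)" using n by simp
  finally show "bernstein xs N n r (xs N) = r (xs N)"
    unfolding bern_repr[OF D] using D by simp
qed

lemma bern_conv:
  fixes xs :: "nat \<Rightarrow> real"
  assumes D: "xs 0 < xs N" and cr: "continuous_on {xs 0 .. xs N} r" and e: "e > 0"
  shows "\<exists>M. \<forall>n x. M \<le> n \<and> x \<in> {xs 0 .. xs N} \<longrightarrow> \<bar>r x - bernstein xs N n r x\<bar> < e"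
proof -
  define h where "h s = r (xs 0 + s * (xs N - xs 0))" for s
  have "continuous_on {0..1} h" unfolding h_def
  proof (rule continuous_on_compose2[OF cr])
    show "continuous_on {0..1} (\<lambda>s::real. xs 0 + s * (xs N - xs 0))" by (intro continuous_intros)
    show "(\<lambda>s. xs 0 + s * (xs N - xs 0)) ` {0..1} \<subseteq> {xs 0..xs N}"
    proof clarify
      fix s :: real assume s: "s \<in> {0..1}"
      have "s * (xs N - xs 0) \<le> 1 * (xs N - xs 0)" using s D by (intro mult_right_mono) auto
      moreover have "0 \<le> s * (xs N - xs 0)" using s D by simp
      ultimately show "xs 0 + s * (xs N - xs 0) \<in> {xs 0..xs N}" by auto
    qed
  qed
  from Bernstein_Weierstrass[OF this e] obtain M where
    M: "\<And>n t. M \<le> n \<Longrightarrow> t \<in> {0..1} \<Longrightarrow> \<bar>h t - (\<Sum>k\<le>n. h (real k / real n) * Bernstein n k t)\<bar> < e"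
    by blast
  show ?thesis
  proof (intro exI allI impI)
    fix n x assume a: "M \<le> n \<and> x \<in> {xs 0..xs N}"
    define t where "t = (x - xs 0) / (xs N - xs 0)"
    have t: "t \<in> {0..1}" using a D by (auto simp: t_def field_simps)
    have ht: "h t = r x" using D by (simp add: h_def t_def)
    show "\<bar>r x - bernstein xs N n r x\<bar> < e"
      using M[of n t] a t ht unfolding bern_repr[OF D] by (simp add: h_def t_def)
  qed
qed

locale frac =
  fixes xs :: "nat \<Rightarrow> real" and N :: nat and \<alpha> :: "nat \<Rightarrow> real"
  assumes N1: "N \<ge> 1"
    and strict: "\<forall>i<N. xs i < xs (Suc i)"
    and alpha: "\<forall>i\<in>{1..N}. \<bar>\<alpha> i\<bar> < 1"
begin

abbreviation "I \<equiv> {xs 0 .. xs N}"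

lemma lt: "i < j \<Longrightarrow> j \<le> N \<Longrightarrow> xs i < xs j"
  using xs_less[OF strict] by blast

lemma le: "i \<le> j \<Longrightarrow> j \<le> N \<Longrightarrow> xs i \<le> xs j"
  using xs_le[OF strict] by blast

lemma x0N: "xs 0 < xs N" using lt N1 by auto

lemma Ii_sub: "i \<in> {1..N} \<Longrightarrow> {xs (i-1) .. xs i} \<subseteq> I"
  using le by auto

lemma d_pos: "i \<in> {1..N} \<Longrightarrow> xs (i-1) < xs i"
  using lt by auto

lemma Linv_in:
  assumes i: "i \<in> {1..N}" and x: "x \<in> {xs (i-1) .. xs i}"
  shows "Linv xs N i x \<in> I"
proof -
  define d where "d = xs i - xs (i-1)"
  define c where "c = (xs N - xs 0) / d"
  have d: "d > 0" using d_pos[OF i] d_def by simp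
  have c: "c > 0" using x0N d c_def by simp
  have "c * (x - xs (i-1)) \<ge> 0" using c x by simp
  moreover have "c * (x - xs (i-1)) \<le> c * d" using c x d_def
    by (intro mult_left_mono) auto
  moreover have "c * d = xs N - xs 0" using d c_def by simp
  ultimately show ?thesis unfolding Linv_def c_def d_def by auto
qed

lemma Linv_left: "Linv xs N i (xs (i-1)) = xs 0"
  by (simp add: Linv_def)

lemma Linv_right: "i \<in> {1..N} \<Longrightarrow> Linv xs N i (xs i) = xs N"
  using d_pos[of i] by (simp add: Linv_def)

lemma cont_Linv: "continuous_on S (Linv xs N i)"
  unfolding Linv_def by (intro continuous_intros)

definition idx :: "real \<Rightarrow> nat" where
  "idx y = (LEAST i. 1 \<le> i \<and> y \<le> xs i)"

lemma idx_props:
  assumes y: "y \<in> I"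
  shows "idx y \<in> {1..N}" "y \<in> {xs (idx y - 1) .. xs (idx y)}"
proof -
  have ex: "1 \<le> N \<and> y \<le> xs N" using y N1 by auto
  have l: "1 \<le> idx y \<and> y \<le> xs (idx y)" unfolding idx_def
    by (rule LeastI[of _ N]) (rule ex)
  have u: "idx y \<le> N" unfolding idx_def by (rule Least_le) (rule ex)
  show "idx y \<in> {1..N}" using l u by auto
  have "xs (idx y - 1) \<le> y"
  proof (cases "idx y = 1")
    case True then show ?thesis using y by simp
  next
    case False
    then have "idx y - 1 < idx y" "1 \<le> idx y - 1" using l by auto
    then have "\<not> (1 \<le> idx y - 1 \<and> y \<le> xs (idx y - 1))"
      unfolding idx_def using not_less_Least by blast
    then show ?thesis using \<open>1 \<le> idx y - 1\<close> by auto
  qed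
  then show "y \<in> {xs (idx y - 1) .. xs (idx y)}" using l by auto
qed

lemma idx_cases:
  assumes i: "i \<in> {1..N}" and y: "y \<in> {xs (i-1) .. xs i}"
  shows "idx y = i \<or> (idx y = i - 1 \<and> y = xs (i-1) \<and> i \<ge> 2)"
proof -
  have yI: "y \<in> I" using Ii_sub[OF i] y by auto
  have u: "idx y \<le> i" unfolding idx_def by (rule Least_le) (use i y in auto)
  note p = idx_props[OF yI]
  have "idx y \<ge> i - 1"
  proof (rule ccontr)
    assume "\<not> ?thesis"
    then have "idx y < i - 1" by simp
    then have "xs (idx y) < xs (i-1)" using lt i by auto
    then show False using p y by auto
  qed
  then consider "idx y = i" | "idx y = i - 1" using u by linarith
  then show ?thesis
  proof cases
    case 2
    show ?thesis
    proof (cases "idx y = i")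
      case False
      then have "i \<ge> 2" using 2 p(1) by auto
      moreover have "y = xs (i-1)" using p(2) 2 y by auto
      ultimately show ?thesis using 2 by auto
    qed simp
  qed simp
qed

lemma cover: "I = (\<Union>i\<in>{1..N}. {xs (i-1) .. xs i})"
  using idx_props Ii_sub by blast

definition E :: "(real \<Rightarrow> real) \<Rightarrow> (real \<Rightarrow> real) \<Rightarrow> (real \<Rightarrow> real) \<Rightarrow> nat \<Rightarrow> real \<Rightarrow> real" where
  "E f b g i y = f y + \<alpha> i * (g (Linv xs N i y) - b (Linv xs N i y))"

definition F :: "(real \<Rightarrow> real) \<Rightarrow> (real \<Rightarrow> real) \<Rightarrow> (real \<Rightarrow> real) \<Rightarrow> real \<Rightarrow> real" where
  "F f b g y = E f b g (idx y) y"

lemma F_eq: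
  assumes i: "i \<in> {1..N}" and y: "y \<in> {xs (i-1) .. xs i}"
    and g0: "g (xs 0) = f (xs 0)" and gN: "g (xs N) = f (xs N)"
    and b0: "b (xs 0) = f (xs 0)" and bN: "b (xs N) = f (xs N)"
  shows "F f b g y = E f b g i y"
  using idx_cases[OF i y]
proof
  assume h: "idx y = i - 1 \<and> y = xs (i - 1) \<and> 2 \<le> i"
  have i1: "i - 1 \<in> {1..N}" using h i by auto
  have "Linv xs N (i-1) (xs (i-1)) = xs N" using Linv_right[OF i1] .
  then have "E f b g (i-1) y = f y" using h gN bN by (simp add: E_def)
  moreover have "E f b g i y = f y" using h Linv_left[of i] g0 b0 by (simp add: E_def)
  ultimately show ?thesis using h unfolding F_def by metis
qed (simp add: F_def)

end


context frac begin

definition amax where "amax = Max ((\<lambda>i. \<bar>\<alpha> i\<bar>) ` {1..N})"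

lemma amax_ge: "i \<in> {1..N} \<Longrightarrow> \<bar>\<alpha> i\<bar> \<le> amax"
  unfolding amax_def by (rule Max_ge) auto

lemma amax_nonneg: "0 \<le> amax"
  using amax_ge[of 1] N1 by force

lemma amax_lt1: "amax < 1"
proof -
  have "amax \<in> (\<lambda>i. \<bar>\<alpha> i\<bar>) ` {1..N}" unfolding amax_def
    by (rule Max_in) (use N1 in auto)
  then show ?thesis using alpha by auto
qed

lemma cont_E:
  assumes cf: "continuous_on I f" and cb: "continuous_on I b" and cg: "continuous_on I g"
    and i: "i \<in> {1..N}"
  shows "continuous_on {xs (i-1) .. xs i} (E f b g i)"
proof -
  have sub: "{xs (i-1) .. xs i} \<subseteq> I" using Ii_sub[OF i] .
  have im: "Linv xs N i ` {xs (i-1) .. xs i} \<subseteq> I" using Linv_in[OF i] by auto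
  have "continuous_on {xs (i-1) .. xs i} (\<lambda>y. g (Linv xs N i y))"
    by (rule continuous_on_compose2[OF cg cont_Linv im])
  moreover have "continuous_on {xs (i-1) .. xs i} (\<lambda>y. b (Linv xs N i y))"
    by (rule continuous_on_compose2[OF cb cont_Linv im])
  moreover have "continuous_on {xs (i-1) .. xs i} f" using continuous_on_subset[OF cf sub] .
  ultimately show ?thesis unfolding E_def by (intro continuous_intros)
qed

lemma cont_F:
  assumes cf: "continuous_on I f" and cb: "continuous_on I b" and cg: "continuous_on I g"
    and g0: "g (xs 0) = f (xs 0)" and gN: "g (xs N) = f (xs N)"
    and b0: "b (xs 0) = f (xs 0)" and bN: "b (xs N) = f (xs N)"
  shows "continuous_on I (F f b g)"
proof -
  have "continuous_on (\<Union>i\<in>{1..N}. {xs (i-1) .. xs i}) (F f b g)"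
  proof (rule continuous_on_closed_Union)
    fix i assume i: "i \<in> {1..N}"
    show "continuous_on {xs (i-1) .. xs i} (F f b g)"
      using cont_E[OF cf cb cg i]
      by (rule continuous_on_cong[THEN iffD1, rotated 2])
         (use F_eq[OF i _ g0 gN b0 bN] in auto)
  qed auto
  then show ?thesis using cover by simp
qed

definition cl :: "real \<Rightarrow> real" where "cl x = max (xs 0) (min (xs N) x)"

lemma cl_in: "cl x \<in> I" using x0N by (auto simp: cl_def)
lemma cl_id: "x \<in> I \<Longrightarrow> cl x = x" by (auto simp: cl_def)
lemma cont_cl: "continuous_on S cl" unfolding cl_def by (intro continuous_intros)

lemma in_bcontfun:
  assumes "continuous_on I h"
  shows "(\<lambda>x. h (cl x)) \<in> bcontfun"
proof -
  have c: "continuous_on UNIV (\<lambda>x. h (cl x))"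
    by (rule continuous_on_compose2[OF assms cont_cl]) (use cl_in in auto)
  have "bounded (h ` I)" by (intro compact_imp_bounded compact_continuous_image assms) auto
  moreover have "range (\<lambda>x. h (cl x)) \<subseteq> h ` I" using cl_in by auto
  ultimately have "bounded (range (\<lambda>x. h (cl x)))" by (rule bounded_subset)
  then show ?thesis using c by (simp add: bcontfun_def)
qed

definition Tm :: "(real \<Rightarrow> real) \<Rightarrow> (real \<Rightarrow> real) \<Rightarrow> (real \<Rightarrow>\<^sub>C real) \<Rightarrow> (real \<Rightarrow>\<^sub>C real)" where
  "Tm f b G = Bcontfun (\<lambda>x. F f b (apply_bcontfun G) (cl x))"

definition Sset :: "(real \<Rightarrow> real) \<Rightarrow> (real \<Rightarrow>\<^sub>C real) set" where
  "Sset f = {G. apply_bcontfun G (xs 0) = f (xs 0) \<and> apply_bcontfun G (xs N) = f (xs N)}"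

lemma Sset_PiC: "Sset f = PiC {xs 0, xs N} (\<lambda>y. {f y})"
  by (auto simp: Sset_def mem_PiC_iff)

lemma Sset_complete: "complete (Sset f)"
  unfolding complete_eq_closed Sset_PiC by (rule closed_PiC) auto

lemma fractal_exists:
  assumes cf: "continuous_on I f" and cb: "continuous_on I b"
    and b0: "b (xs 0) = f (xs 0)" and bN: "b (xs N) = f (xs N)"
  shows "\<exists>g. continuous_on I g
      \<and> (\<forall>i\<in>{1..N}. \<forall>x\<in>{xs (i - 1) .. xs i}.
           g x = f x + \<alpha> i * (g (Linv xs N i x) - b (Linv xs N i x)))
      \<and> (\<forall>x. x \<notin> I \<longrightarrow> g x = 0)"
proof -
  have Tapp: "apply_bcontfun (Tm f b G) = (\<lambda>x. F f b (apply_bcontfun G) (cl x))"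
    if "G \<in> Sset f" for G
  proof -
    have "continuous_on I (F f b (apply_bcontfun G))"
      by (rule cont_F[OF cf cb]) (use that b0 bN in \<open>auto simp: Sset_def\<close>)
    then show ?thesis unfolding Tm_def by (intro Bcontfun_inverse in_bcontfun)
  qed
  have ne: "Sset f \<noteq> {}"
  proof -
    have "apply_bcontfun (Bcontfun (\<lambda>x. f (cl x))) = (\<lambda>x. f (cl x))"
      by (intro Bcontfun_inverse in_bcontfun cf)
    then have "Bcontfun (\<lambda>x. f (cl x)) \<in> Sset f"
      using x0N by (simp add: Sset_def cl_id)
    then show ?thesis by blast
  qed
  have inv: "Tm f b ` Sset f \<subseteq> Sset f"
  proof
    fix H assume "H \<in> Tm f b ` Sset f"
    then obtain G where G: "G \<in> Sset f" and H: "H = Tm f b G" by blast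
    have g0: "G (xs 0) = f (xs 0)" and gN: "G (xs N) = f (xs N)" using G by (auto simp: Sset_def)
    have "F f b G (xs 0) = E f b G 1 (xs 0)"
      by (rule F_eq) (use N1 x0N g0 gN b0 bN le[of 0 1] in auto)
    also have "\<dots> = f (xs 0)" using Linv_left[of 1] g0 b0 by (simp add: E_def)
    finally have 1: "F f b G (xs 0) = f (xs 0)" .
    have "F f b G (xs N) = E f b G N (xs N)"
      by (rule F_eq) (use N1 x0N g0 gN b0 bN le[of "N-1" N] in auto)
    also have "\<dots> = f (xs N)" using Linv_right[of N] N1 gN bN by (simp add: E_def)
    finally have 2: "F f b G (xs N) = f (xs N)" .
    show "H \<in> Sset f" using 1 2 Tapp[OF G] H x0N by (simp add: Sset_def cl_id)
  qed
  have lip: "dist (Tm f b G) (Tm f b H) \<le> amax * dist G H"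
    if G: "G \<in> Sset f" and H: "H \<in> Sset f" for G H
  proof (rule dist_bound)
    fix x
    define y where "y = cl x"
    define z where "z = Linv xs N (idx y) y"
    have yI: "y \<in> I" using cl_in y_def by simp
    have "dist (Tm f b G x) (Tm f b H x) = \<bar>\<alpha> (idx y) * (G z - H z)\<bar>"
      using Tapp[OF G] Tapp[OF H] by (simp add: F_def E_def dist_real_def y_def z_def algebra_simps)
    also have "\<dots> = \<bar>\<alpha> (idx y)\<bar> * dist (G z) (H z)" by (simp add: abs_mult dist_real_def)
    also have "\<dots> \<le> amax * dist G H"
      by (intro mult_mono amax_ge idx_props(1)[OF yI] dist_bounded) (auto simp: amax_nonneg)
    finally show "dist (Tm f b G x) (Tm f b H x) \<le> amax * dist G H" .
  qed
  obtain G where G: "G \<in> Sset f" and fx: "Tm f b G = G"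
    using Banach_fix[OF Sset_complete ne amax_nonneg amax_lt1 inv lip] by blast
  define g where "g x = (if x \<in> I then apply_bcontfun G x else 0)" for x
  have g0: "G (xs 0) = f (xs 0)" and gN: "G (xs N) = f (xs N)" using G by (auto simp: Sset_def)
  have "continuous_on I g"
    by (rule continuous_on_cong[THEN iffD1, OF refl _ continuous_on_apply_bcontfun[of I G]])
       (simp add: g_def)
  moreover have "\<forall>i\<in>{1..N}. \<forall>x\<in>{xs (i - 1) .. xs i}.
           g x = f x + \<alpha> i * (g (Linv xs N i x) - b (Linv xs N i x))"
  proof (intro ballI)
    fix i x assume i: "i \<in> {1..N}" and x: "x \<in> {xs (i - 1) .. xs i}"
    have xI: "x \<in> I" using Ii_sub[OF i] x by auto
    have "g x = Tm f b G x" using fx xI by (simp add: g_def)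
    also have "\<dots> = F f b G x" using Tapp[OF G] xI by (simp add: cl_id)
    also have "\<dots> = E f b G i x" by (rule F_eq[OF i x g0 gN b0 bN])
    also have "\<dots> = f x + \<alpha> i * (g (Linv xs N i x) - b (Linv xs N i x))"
      using Linv_in[OF i x] by (simp add: E_def g_def)
    finally show "g x = f x + \<alpha> i * (g (Linv xs N i x) - b (Linv xs N i x))" .
  qed
  moreover have "\<forall>x. x \<notin> I \<longrightarrow> g x = 0" by (simp add: g_def)
  ultimately show ?thesis by blast
qed

end


context frac begin

definition P where
  "P f b g \<longleftrightarrow> continuous_on I g
      \<and> (\<forall>i\<in>{1..N}. \<forall>x\<in>{xs (i - 1) .. xs i}.
           g x = f x + \<alpha> i * (g (Linv xs N i x) - b (Linv xs N i x)))
      \<and> (\<forall>x. x \<notin> I \<longrightarrow> g x = 0)"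

lemma maxpt:
  fixes h :: "real \<Rightarrow> real"
  assumes "continuous_on I h"
  obtains z where "z \<in> I" "\<And>y. y \<in> I \<Longrightarrow> h y \<le> h z"
  using continuous_attains_sup[of I h] assms x0N by fastforce

lemma P_step:
  assumes "P f b g" "z \<in> I"
  obtains w where "w \<in> I" "g z = f z + \<alpha> (idx z) * (g w - b w)" "\<bar>\<alpha> (idx z)\<bar> \<le> amax"
proof -
  have i: "idx z \<in> {1..N}" and zi: "z \<in> {xs (idx z - 1) .. xs (idx z)}"
    using idx_props[OF assms(2)] by auto
  show ?thesis
    by (rule that[of "Linv xs N (idx z) z"])
       (use Linv_in[OF i zi] assms(1) i zi amax_ge[OF i] in \<open>auto simp: P_def\<close>)
qed

lemma P_unique:
  assumes g1: "P f b g1" and g2: "P f b g2"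
  shows "g1 = g2"
proof -
  have c: "continuous_on I (\<lambda>x. \<bar>g1 x - g2 x\<bar>)"
    using g1 g2 unfolding P_def by (intro continuous_intros) auto
  obtain z where z: "z \<in> I" and zm: "\<And>y. y \<in> I \<Longrightarrow> \<bar>g1 y - g2 y\<bar> \<le> \<bar>g1 z - g2 z\<bar>"
    using maxpt[OF c] by blast
  have i: "idx z \<in> {1..N}" and zi: "z \<in> {xs (idx z - 1) .. xs (idx z)}"
    using idx_props[OF z] by auto
  define w where "w = Linv xs N (idx z) z"
  have wI: "w \<in> I" using Linv_in[OF i zi] w_def by simp
  have e1: "g1 z = f z + \<alpha> (idx z) * (g1 w - b w)"
    using g1 i zi unfolding P_def w_def by blast
  have e2: "g2 z = f z + \<alpha> (idx z) * (g2 w - b w)"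
    using g2 i zi unfolding P_def w_def by blast
  have "g1 z - g2 z = \<alpha> (idx z) * (g1 w - g2 w)"
    using e1 e2 by (simp add: algebra_simps)
  then have "\<bar>g1 z - g2 z\<bar> = \<bar>\<alpha> (idx z)\<bar> * \<bar>g1 w - g2 w\<bar>" by (simp add: abs_mult)
  also have "\<dots> \<le> amax * \<bar>g1 z - g2 z\<bar>"
    by (intro mult_mono amax_ge i zm wI) (auto simp: amax_nonneg)
  finally have "(1 - amax) * \<bar>g1 z - g2 z\<bar> \<le> 0" by (simp add: algebra_simps)
  then have "\<bar>g1 z - g2 z\<bar> \<le> 0" using amax_lt1
    by (simp add: mult_le_0_iff)
  then have "\<And>y. y \<in> I \<Longrightarrow> g1 y = g2 y" using zm by (meson abs_le_zero_iff eq_iff_diff_eq_0 order_trans)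
  moreover have "\<And>y. y \<notin> I \<Longrightarrow> g1 y = g2 y" using g1 g2 by (simp add: P_def)
  ultimately show ?thesis by blast
qed

lemma fractal_P:
  assumes cf: "continuous_on I f" and cb: "continuous_on I b"
    and b0: "b (xs 0) = f (xs 0)" and bN: "b (xs N) = f (xs N)"
  shows "P f b (fractal xs N \<alpha> b f)"
proof -
  have ex: "\<exists>!g. P f b g"
    using fractal_exists[OF assms] P_unique unfolding P_def by blast
  have "fractal xs N \<alpha> b f = (THE g. P f b g)"
    unfolding fractal_def P_def Ivl_def ..
  then show ?thesis using theI'[OF ex] by simp
qed

lemma P_estimate:
  assumes g: "P f b g" and cf: "continuous_on I f"
    and d: "\<And>x. x \<in> I \<Longrightarrow> \<bar>f x - b x\<bar> \<le> \<delta>"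
    and x: "x \<in> I"
  shows "\<bar>g x - f x\<bar> \<le> \<delta> / (1 - amax)"
proof -
  have c: "continuous_on I (\<lambda>x. \<bar>g x - f x\<bar>)"
    using g cf unfolding P_def by (intro continuous_intros) auto
  obtain z where z: "z \<in> I" and zm: "\<And>y. y \<in> I \<Longrightarrow> \<bar>g y - f y\<bar> \<le> \<bar>g z - f z\<bar>"
    using maxpt[OF c] by blast
  obtain w where wI: "w \<in> I" and e: "g z = f z + \<alpha> (idx z) * (g w - b w)"
    and a: "\<bar>\<alpha> (idx z)\<bar> \<le> amax"
    using P_step[OF g z] by blast
  have dpos: "0 \<le> \<delta>" using d[OF z] by linarith
  have "\<bar>g z - f z\<bar> = \<bar>\<alpha> (idx z)\<bar> * \<bar>(g w - f w) + (f w - b w)\<bar>"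
    using e by (simp add: abs_mult)
  also have "\<dots> \<le> amax * (\<bar>g z - f z\<bar> + \<delta>)"
  proof (intro mult_mono a)
    show "\<bar>(g w - f w) + (f w - b w)\<bar> \<le> \<bar>g z - f z\<bar> + \<delta>"
      using zm[OF wI] d[OF wI] by linarith
  qed (auto simp: amax_nonneg)
  finally have "(1 - amax) * \<bar>g z - f z\<bar> \<le> amax * \<delta>" by (simp add: algebra_simps)
  also have "\<dots> \<le> \<delta>" using mult_right_mono[of amax 1 \<delta>] amax_lt1 dpos by simp
  finally have "\<bar>g z - f z\<bar> \<le> \<delta> / (1 - amax)" using amax_lt1
    by (simp add: pos_le_divide_eq mult.commute)
  then show ?thesis using zm[OF x] by linarith
qed

end


lemma sup_upper:
  fixes h :: "real \<Rightarrow> real"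
  assumes "continuous_on {a..b} h" "x \<in> {a..b}"
  shows "\<bar>h x\<bar> \<le> supnorm_on {a..b} h"
proof -
  have "continuous_on {a..b} (\<lambda>x. \<bar>h x\<bar>)" using assms(1) by (intro continuous_intros)
  then have "bounded ((\<lambda>x. \<bar>h x\<bar>) ` {a..b})"
    by (intro compact_imp_bounded compact_continuous_image) auto
  then have "bdd_above ((\<lambda>x. \<bar>h x\<bar>) ` {a..b})" by (rule bounded_imp_bdd_above)
  then show ?thesis unfolding supnorm_on_def by (rule cSup_upper[rotated]) (use assms(2) in auto)
qed

lemma sup_least:
  fixes h :: "real \<Rightarrow> real"
  assumes "a \<le> b" "\<And>x. x \<in> {a..b} \<Longrightarrow> \<bar>h x\<bar> \<le> B"
  shows "supnorm_on {a..b} h \<le> B"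
  unfolding supnorm_on_def by (rule cSup_least) (use assms in auto)

context frac begin

lemma fop_P:
  assumes cr: "continuous_on I r" and n: "n \<ge> 1"
  shows "P r (bernstein xs N n r) (fractal_op xs N \<alpha> n r)"
  unfolding fractal_op_def
  by (rule fractal_P[OF cr bern_cont[OF x0N] bern_ends[OF x0N n]])

end

lemma rat_cont:
  assumes "r \<in> rat_fun xs N l m"
  shows "continuous_on (Ivl xs N) r"
proof -
  obtain p q where r: "r = (\<lambda>x. poly p x / poly q x)" and q: "\<forall>x\<in>Ivl xs N. poly q x > 0"
    using assms unfolding rat_fun_def by blast
  show ?thesis unfolding r
    by (rule continuous_on_divide) (use q in \<open>auto intro: continuous_intros\<close>)
qed

theorem theorem3p9:
  fixes xs :: "nat \<Rightarrow> real" and N :: nat and \<alpha> :: "nat \<Rightarrow> real"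
    and f :: "real \<Rightarrow> real" and l m :: nat
  assumes "N \<ge> 2"
    and "\<forall>i<N. xs i < xs (Suc i)"
    and "\<forall>i\<in>{1..N}. \<bar>\<alpha> i\<bar> < 1"
    and "continuous_on (Ivl xs N) f"
  shows "dist_on (Ivl xs N) f (frac_rat_fun xs N \<alpha> l m)
           \<le> dist_on (Ivl xs N) f (rat_fun xs N l m)"
proof -
  interpret frac xs N \<alpha> using assms by unfold_locales auto
  have IV: "Ivl xs N = {xs 0 .. xs N}" by (simp add: Ivl_def)
  have cf: "continuous_on I f" using assms(4) IV by simp
  have x0I: "xs 0 \<in> I" using x0N by simp
  define V where "V A = (\<lambda>s. supnorm_on I (\<lambda>x. f x - s x)) ` A" for A
  have fcont: "continuous_on I s" if sA: "s \<in> frac_rat_fun xs N \<alpha> l m" for s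
  proof -
    obtain r n where s: "s = fractal_op xs N \<alpha> n r" and r: "r \<in> rat_fun xs N l m" and n: "n \<ge> 1"
      using sA unfolding frac_rat_fun_def by blast
    have "continuous_on I r" using rat_cont[OF r] IV by simp
    then show ?thesis using fop_P[OF _ n] s by (simp add: P_def)
  qed
  have bdd: "bdd_below (V (frac_rat_fun xs N \<alpha> l m))"
  proof (rule bdd_belowI[of _ 0])
    fix y assume "y \<in> V (frac_rat_fun xs N \<alpha> l m)"
    then obtain s where s: "s \<in> frac_rat_fun xs N \<alpha> l m" and y: "y = supnorm_on I (\<lambda>x. f x - s x)"
      unfolding V_def by blast
    have "continuous_on I (\<lambda>x. f x - s x)" using cf fcont[OF s] by (intro continuous_intros)
    from sup_upper[OF this x0I] show "0 \<le> y" using y by linarith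
  qed
  have ne: "V (rat_fun xs N l m) \<noteq> {}"
  proof -
    have "(\<lambda>x. poly 0 x / poly 1 x) \<in> rat_fun xs N l m"
      unfolding rat_fun_def by (rule CollectI, rule exI[of _ 0], rule exI[of _ 1]) simp
    then show ?thesis unfolding V_def by blast
  qed
  have "Inf (V (frac_rat_fun xs N \<alpha> l m)) \<le> Inf (V (rat_fun xs N l m))"
  proof (rule cInf_greatest[OF ne])
    fix y assume "y \<in> V (rat_fun xs N l m)"
    then obtain r where r: "r \<in> rat_fun xs N l m" and y: "y = supnorm_on I (\<lambda>x. f x - r x)"
      unfolding V_def by blast
    have cr: "continuous_on I r" using rat_cont[OF r] IV by simp
    show "Inf (V (frac_rat_fun xs N \<alpha> l m)) \<le> y"
    proof (rule field_le_epsilon)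
      fix e :: real assume e: "e > 0"
      define \<delta> where "\<delta> = e * (1 - amax)"
      have d: "\<delta> > 0" using e amax_lt1 by (simp add: \<delta>_def)
      obtain M where M: "\<And>n x. M \<le> n \<Longrightarrow> x \<in> I \<Longrightarrow> \<bar>r x - bernstein xs N n r x\<bar> < \<delta>"
        using bern_conv[OF x0N cr d] by blast
      define n where "n = max M 1"
      have n: "n \<ge> 1" "M \<le> n" by (auto simp: n_def)
      define g where "g = fractal_op xs N \<alpha> n r"
      have gA: "g \<in> frac_rat_fun xs N \<alpha> l m" unfolding frac_rat_fun_def g_def using r n by blast
      have est: "\<bar>g x - r x\<bar> \<le> e" if x: "x \<in> I" for x
      proof -
        have "\<bar>g x - r x\<bar> \<le> \<delta> / (1 - amax)"
          unfolding g_def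
          by (rule P_estimate[OF fop_P[OF cr n(1)] cr _ x]) (use M[OF n(2)] in \<open>auto intro: less_imp_le\<close>)
        also have "\<dots> = e" using amax_lt1 by (simp add: \<delta>_def)
        finally show ?thesis .
      qed
      have cfr: "continuous_on I (\<lambda>x. f x - r x)" using cf cr by (intro continuous_intros)
      have "Inf (V (frac_rat_fun xs N \<alpha> l m)) \<le> supnorm_on I (\<lambda>x. f x - g x)"
        by (rule cInf_lower[OF _ bdd]) (use gA in \<open>auto simp: V_def\<close>)
      also have "\<dots> \<le> y + e"
      proof (rule sup_least)
        show "xs 0 \<le> xs N" using x0N by simp
        fix x assume x: "x \<in> I"
        have "\<bar>f x - r x\<bar> \<le> y" using sup_upper[OF cfr x] y by simp
        then show "\<bar>f x - g x\<bar> \<le> y + e" using est[OF x] by linarith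
      qed
      finally show "Inf (V (frac_rat_fun xs N \<alpha> l m)) \<le> y + e" .
    qed
  qed
  then show ?thesis unfolding dist_on_def V_def IV .
qed

end
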